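(* The set $\{\beta^k G^{(\beta)}_a : k\in\mathbb{Z}_{\ge0},\ a \text{ a composition with } \ell(a)\le n\}$ (including the empty composition) is a $\mathbb{Z}$-basis of $\mathrm{QSym}_n[\beta]$. Consequently $\{G^{(-1)}_a : \ell(a)\le n\}$ is a $\mathbb{Z}$-basis of $\mathrm{QSym}_n$.
   Context: $\mathrm{QSym}_n\subseteq\mathbb{Z}[x_1,\dots,x_n]$ is the subring of quasisymmetric polynomials: those in which the coefficients of $x_{i_1}^{e_1}\cdots x_{i_k}^{e_k}$ and $x_{j_1}^{e_1}\cdots x_{j_k}^{e_k}$ agree for all $i_1<\dots<i_k$ and $j_1<\dots<j_k$; $\mathrm{QSym}_n[\beta]$ is polynomials in formal $\beta$ with coefficients in it. Compositions have positive entries; $\ell(a)$ is the length; $0^m a$ prepends $m$ zeros. Glides: a weak komposition is a weak composition whose positive entries are colored black or red, $\mathrm{ex}$ = number of red entries, $\mathtt{flat}$ = nonzero entries. For a weak composition $a'$ of length $n$ with nonzero entries exactly at $n_1<\dots<n_\ell$, a weak komposition $b$ of length $n$ is a glide of $a'$ if there exist $0=i_0<\dots<i_\ell$ with $i_j\le n_j$, $b_k=0$ for $k>i_\ell$, and for each $j$: $b_{i_{j-1}+1}+\dots+b_{i_j}=\mathtt{flat}(a')_j+\#\{\text{red entries among them}\}$ and the first nonzero entry among them is black. $\mathcal{G}^{(\beta)}_{a'}=\sum_b\beta^{\mathrm{ex}(b)}x^b$ over glides $b$ of $a'$. For a composition $a$ with $\ell(a)\le n$, $G^{(\beta)}_a(x_1,\dots,x_n)=\mathcal{G}^{(\beta)}_{0^{n-\ell(a)}a}$.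 *)

theory Defs
  imports Main
begin

text \<open>Polynomials in \<open>\<int>[\<beta>][x_1,...,x_n]\<close> are represented as integer-valued
  coefficient functions on monomials \<open>(k, b)\<close> standing for \<open>\<beta>^k x^b\<close>, where the
  exponent vector \<open>b\<close> is a list of length \<open>n\<close> (variable \<open>x_(t+1)\<close> has exponent \<open>b ! t\<close>).
  Polynomials in \<open>\<int>[x_1,...,x_n]\<close> are coefficient functions on exponent lists.\<close>

type_synonym bpoly = "nat \<times> nat list \<Rightarrow> int"
type_synonym xpoly = "nat list \<Rightarrow> int"

text \<open>Exponent vector of the monomial \<open>x_{i_1}^{e_1}\<cdots>x_{i_k}^{e_k}\<close> (0-indexed variables).\<close>
definition expvec :: "nat \<Rightarrow> nat list \<Rightarrow> nat list \<Rightarrow> nat list" where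
  "expvec n i e = map (\<lambda>m. \<Sum>t<length i. if i ! t = m then e ! t else 0) [0..<n]"

definition qsym_cond :: "nat \<Rightarrow> (nat list \<Rightarrow> int) \<Rightarrow> bool" where
  "qsym_cond n p \<longleftrightarrow>
     (\<forall>e i j. length i = length e \<and> length j = length e \<and>
        sorted_wrt (<) i \<and> sorted_wrt (<) j \<and> set i \<subseteq> {..<n} \<and> set j \<subseteq> {..<n} \<and>
        (\<forall>x\<in>set e. 0 < x)
        \<longrightarrow> p (expvec n i e) = p (expvec n j e))"

definition QSym :: "nat \<Rightarrow> xpoly set" where
  "QSym n = {p. finite {b. p b \<noteq> 0} \<and> (\<forall>b. p b \<noteq> 0 \<longrightarrow> length b = n) \<and> qsym_cond n p}"

definition QSymB :: "nat \<Rightarrow> bpoly set" where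
  "QSymB n = {p. finite {m. p m \<noteq> 0} \<and> (\<forall>k b. p (k, b) \<noteq> 0 \<longrightarrow> length b = n) \<and>
                 (\<forall>k. qsym_cond n (\<lambda>b. p (k, b)))}"

definition composition :: "nat list \<Rightarrow> bool" where
  "composition a \<longleftrightarrow> (\<forall>x\<in>set a. 0 < x)"

definition flat :: "nat list \<Rightarrow> nat list" where
  "flat a = filter (\<lambda>x. x \<noteq> 0) a"

text \<open>1-indexed positions \<open>n_1 < ... < n_\<ell>\<close> of the nonzero entries.\<close>
definition nzpos :: "nat list \<Rightarrow> nat list" where
  "nzpos a = filter (\<lambda>k. a ! (k - 1) \<noteq> 0) [1..<length a + 1]"

text \<open>A weak komposition of length \<open>n\<close> is a pair \<open>(b, red)\<close> of lists of length \<open>n\<close>;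
  \<open>red ! t\<close> says that entry \<open>t\<close> is colored red (only positive entries may be red).
  Positions in the glide definition are 1-indexed, so entry \<open>k\<close> is \<open>b ! (k - 1)\<close>.\<close>
definition glide :: "nat list \<Rightarrow> nat list \<Rightarrow> bool list \<Rightarrow> bool" where
  "glide a' b red \<longleftrightarrow>
     (let n = length a'; l = length (nzpos a') in
      length b = n \<and> length red = n \<and> (\<forall>t<n. red ! t \<longrightarrow> 0 < b ! t) \<and>
      (\<exists>\<iota>::nat \<Rightarrow> nat. \<iota> 0 = 0 \<and> (\<forall>j<l. \<iota> j < \<iota> (Suc j)) \<and>
         (\<forall>j\<in>{1..l}. \<iota> j \<le> nzpos a' ! (j - 1)) \<and>
         (\<forall>k. \<iota> l < k \<and> k \<le> n \<longrightarrow> b ! (k - 1) = 0) \<and>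
         (\<forall>j\<in>{1..l}.
            (\<Sum>k\<in>{\<iota> (j - 1)<..\<iota> j}. b ! (k - 1))
              = flat a' ! (j - 1) + card {k\<in>{\<iota> (j - 1)<..\<iota> j}. red ! (k - 1)} \<and>
            (\<exists>m\<in>{\<iota> (j - 1)<..\<iota> j}. b ! (m - 1) \<noteq> 0 \<and> \<not> red ! (m - 1) \<and>
               (\<forall>k\<in>{\<iota> (j - 1)<..<m}. b ! (k - 1) = 0)))))"

definition ex :: "bool list \<Rightarrow> nat" where
  "ex red = length (filter id red)"

text \<open>\<open>\<G>^{(\<beta>)}_{a'} = \<Sum>_b \<beta>^{ex(b)} x^b\<close>: the coefficient of \<open>\<beta>^k x^b\<close> counts the glides
  with underlying weak composition \<open>b\<close> and \<open>k\<close> red entries.\<close>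
definition calG :: "nat list \<Rightarrow> bpoly" where
  "calG a' = (\<lambda>(k, b). int (card {red. glide a' b red \<and> ex red = k}))"

definition Gb :: "nat \<Rightarrow> nat list \<Rightarrow> bpoly" where
  "Gb n a = calG (replicate (n - length a) 0 @ a)"

definition beta_pow_mult :: "nat \<Rightarrow> bpoly \<Rightarrow> bpoly" where
  "beta_pow_mult k p = (\<lambda>(k', b). if k \<le> k' then p (k' - k, b) else 0)"

definition spec_neg1 :: "bpoly \<Rightarrow> xpoly" where
  "spec_neg1 p = (\<lambda>b. \<Sum>k\<in>{k. p (k, b) \<noteq> 0}. (-1) ^ k * p (k, b))"

definition lincomb :: "('i \<Rightarrow> int) \<Rightarrow> ('i \<Rightarrow> 'm \<Rightarrow> int) \<Rightarrow> 'm \<Rightarrow> int" where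
  "lincomb c v = (\<lambda>m. \<Sum>i\<in>{i. c i \<noteq> 0}. c i * v i m)"

definition Z_basis :: "'i set \<Rightarrow> ('i \<Rightarrow> 'm \<Rightarrow> int) \<Rightarrow> ('m \<Rightarrow> int) set \<Rightarrow> bool" where
  "Z_basis I v S \<longleftrightarrow>
     (\<forall>i\<in>I. v i \<in> S) \<and>
     (\<forall>c. finite {i. c i \<noteq> 0} \<and> {i. c i \<noteq> 0} \<subseteq> I \<and> lincomb c v = (\<lambda>_. 0) \<longrightarrow> (\<forall>i. c i = 0)) \<and>
     (\<forall>p\<in>S. \<exists>c. finite {i. c i \<noteq> 0} \<and> {i. c i \<noteq> 0} \<subseteq> I \<and> lincomb c v = p)"

end

theory Submission
  imports Defs
begin

definition colword :: "nat list \<Rightarrow> bool list \<Rightarrow> (nat \<times> bool) list" where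
  "colword b red = filter (\<lambda>p. fst p \<noteq> 0) (zip b red)"
definition wsum :: "(nat \<times> bool) list \<Rightarrow> nat" where "wsum w = sum_list (map fst w)"
definition wred :: "(nat \<times> bool) list \<Rightarrow> nat" where "wred w = length (filter snd w)"

fun ok :: "nat list \<Rightarrow> (nat \<times> bool) list \<Rightarrow> bool" where
  "ok [] w = (w = [])"
| "ok (x # as) w = (\<exists>u v. w = u @ v \<and> u \<noteq> [] \<and> \<not> snd (hd u) \<and> wsum u = x + wred u \<and> ok as v)"

definition nzok :: "nat list \<Rightarrow> bool list \<Rightarrow> bool" where
  "nzok b red = list_all2 (\<lambda>x r. r \<longrightarrow> 0 < x) b red"

lemma wred_append[simp]: "wred (u @ v) = wred u + wred v" by (simp add: wred_def)
lemma wsum_append[simp]: "wsum (u @ v) = wsum u + wsum v" by (simp add: wsum_def)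
lemma wred_le: "wred w \<le> length w" by (simp add: wred_def)

lemma wred_hd: "u \<noteq> [] \<Longrightarrow> \<not> snd (hd u) \<Longrightarrow> Suc (wred u) \<le> length u"
  by (cases u) (auto simp: wred_def)

lemma ok_len: "ok a w \<Longrightarrow> length a + wred w \<le> length w"
proof (induction a arbitrary: w)
  case Nil then show ?case by (simp add: wred_def)
next
  case (Cons x as)
  then obtain u v where "w = u @ v" "u \<noteq> []" "\<not> snd (hd u)" "ok as v" by auto
  with Cons.IH[of v] wred_hd[of u] show ?case by auto
qed

lemma ok_sum: "ok a w \<Longrightarrow> wsum w = sum_list a + wred w"
proof (induction a arbitrary: w)
  case Nil then show ?case by (simp add: wred_def wsum_def)
next
  case (Cons x as)
  then obtain u v where "w = u @ v" "wsum u = x + wred u" "ok as v" by auto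
  with Cons.IH[of v] show ?case by auto
qed

lemma ok_eq: "ok a w \<Longrightarrow> length w = length a \<Longrightarrow> wred w = 0 \<Longrightarrow> map fst w = a"
proof (induction a arbitrary: w)
  case Nil then show ?case by simp
next
  case (Cons x as)
  then obtain u v where uv: "w = u @ v" "u \<noteq> []" "\<not> snd (hd u)" "wsum u = x + wred u" "ok as v" by auto
  have "length as \<le> length v" using ok_len[OF uv(5)] by simp
  moreover have "Suc 0 \<le> length u" using uv(2) by (cases u) auto
  ultimately have lu: "length u = 1" and lv: "length v = length as" using Cons.prems uv(1) by auto
  then obtain y r where u: "u = [(y, r)]" by (cases u) (auto simp: length_Suc_conv)
  have "wred v = 0" "wred u = 0" using Cons.prems uv(1) by auto
  then have "map fst v = as" using Cons.IH[OF uv(5) lv] by simp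
  with u uv show ?case by (simp add: wsum_def wred_def)
qed

lemma ok_single: "ok a (map (\<lambda>x. (x, False)) a)"
proof (induction a)
  case Nil then show ?case by simp
next
  case (Cons x as)
  show ?case
    by (simp, rule exI[of _ "[(x, False)]"], rule exI[of _ "map (\<lambda>x. (x, False)) as"])
      (simp add: Cons wsum_def wred_def)
qed

lemma wred0: "wred w = 0 \<Longrightarrow> map fst w = a \<Longrightarrow> w = map (\<lambda>x. (x, False)) a"
proof (induction w arbitrary: a)
  case Nil then show ?case by simp
next
  case (Cons p w) then show ?case by (cases p) (auto simp: wred_def split: if_splits)
qed

definition g :: "nat list \<Rightarrow> nat list \<Rightarrow> nat \<Rightarrow> nat" where
  "g a e k = card {w. ok a w \<and> map fst w = e \<and> wred w = k}"

lemma g_aa: "g a a 0 = 1"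
proof -
  have "{w. ok a w \<and> map fst w = a \<and> wred w = 0} = {map (\<lambda>x. (x, False)) a}"
    using wred0 ok_single by (auto simp: wred_def comp_def)
  then show ?thesis by (simp add: g_def)
qed

lemma g_ne: "g a e k \<noteq> 0 \<Longrightarrow> \<exists>w. ok a w \<and> map fst w = e \<and> wred w = k"
  unfolding g_def by (metis (mono_tags, lifting) card.empty empty_Collect_eq)

lemma g_tri: "g a e k \<noteq> 0 \<Longrightarrow> (e = a \<and> k = 0) \<or> length a < length e"
proof -
  assume "g a e k \<noteq> 0"
  then obtain w where w: "ok a w" "map fst w = e" "wred w = k" using g_ne by blast
  have le: "length a + k \<le> length e" using ok_len[OF w(1)] w by auto
  show ?thesis
  proof (cases "k = 0 \<and> length e = length a")
    case True
    then have "map fst w = a" using ok_eq[OF w(1)] w by auto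
    with True w show ?thesis by auto
  next
    case False with le show ?thesis by auto
  qed
qed

lemma g_bound: "g a e k \<noteq> 0 \<Longrightarrow> k \<le> length e \<and> sum_list e = sum_list a + k"
proof -
  assume "g a e k \<noteq> 0"
  then obtain w where w: "ok a w" "map fst w = e" "wred w = k" using g_ne by blast
  show ?thesis using ok_sum[OF w(1)] wred_le[of w] w by (auto simp: wsum_def)
qed

definition nzidx :: "nat list \<Rightarrow> nat list" where
  "nzidx b = filter (\<lambda>t. b ! t \<noteq> 0) [0..<length b]"

lemma filter_nth_conv: "filter P xs = map (nth xs) (filter (\<lambda>t. P (xs ! t)) [0..<length xs])"
proof (induction xs rule: rev_induct)
  case Nil then show ?case by simp
next
  case (snoc x xs)
  have "filter (\<lambda>t. P ((xs @ [x]) ! t)) [0..<length xs] = filter (\<lambda>t. P (xs ! t)) [0..<length xs]"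
    by (rule filter_cong) (auto simp: nth_append)
  moreover have "map (nth (xs @ [x])) (filter (\<lambda>t. P (xs ! t)) [0..<length xs])
      = map (nth xs) (filter (\<lambda>t. P (xs ! t)) [0..<length xs])"
    by (rule map_cong) (auto simp: nth_append)
  ultimately show ?case using snoc by (simp add: nth_append)
qed

lemma flat_nth: "flat b = map (nth b) (nzidx b)"
  unfolding flat_def nzidx_def by (rule filter_nth_conv)

lemma nzidx_sorted: "sorted_wrt (<) (nzidx b)"
  unfolding nzidx_def by (rule sorted_wrt_filter) simp

lemma nzidx_set: "set (nzidx b) = {t. t < length b \<and> b ! t \<noteq> 0}"
  unfolding nzidx_def by auto

lemma length_nzidx: "length (nzidx b) = length (flat b)"
  by (simp add: flat_nth)

lemma length_expvec[simp]: "length (expvec n i e) = n"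
  by (simp add: expvec_def)

lemma expvec_nth_in:
  assumes "distinct i" "t < length i" "i ! t < n"
  shows "expvec n i e ! (i ! t) = e ! t"
proof -
  have "expvec n i e ! (i ! t) = (\<Sum>t'<length i. if i ! t' = i ! t then e ! t' else 0)"
    using assms by (simp add: expvec_def)
  also have "\<dots> = (\<Sum>t'<length i. if t' = t then e ! t' else 0)"
    by (rule sum.cong) (use assms in \<open>auto simp: nth_eq_iff_index_eq\<close>)
  also have "\<dots> = e ! t" using assms by simp
  finally show ?thesis .
qed

lemma expvec_nth_out:
  assumes "m < n" "m \<notin> set i"
  shows "expvec n i e ! m = 0"
proof -
  have "expvec n i e ! m = (\<Sum>t'<length i. if i ! t' = m then e ! t' else 0)"
    using assms by (simp add: expvec_def)
  also have "\<dots> = 0" by (rule sum.neutral) (use assms in \<open>auto\<close>)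
  finally show ?thesis .
qed

lemma expvec_nzidx:
  assumes "length b = n"
  shows "expvec n (nzidx b) (flat b) = b"
proof (rule nth_equalityI)
  show "length (expvec n (nzidx b) (flat b)) = length b" using assms by simp
  fix m assume "m < length (expvec n (nzidx b) (flat b))"
  then have m: "m < n" by simp
  show "expvec n (nzidx b) (flat b) ! m = b ! m"
  proof (cases "b ! m = 0")
    case True
    then have "m \<notin> set (nzidx b)" by (simp add: nzidx_set)
    with expvec_nth_out[OF m] True show ?thesis by simp
  next
    case False
    then have "m \<in> set (nzidx b)" using m assms by (simp add: nzidx_set)
    then obtain t where t: "t < length (nzidx b)" "nzidx b ! t = m" by (auto simp: in_set_conv_nth)
    have d: "distinct (nzidx b)" using nzidx_sorted strict_sorted_iff by blast
    have "expvec n (nzidx b) (flat b) ! m = flat b ! t"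
      using expvec_nth_in[OF d t(1), of n "flat b"] t m by simp
    also have "\<dots> = b ! m" using t by (simp add: flat_nth)
    finally show ?thesis .
  qed
qed

lemma nzidx_expvec:
  assumes s: "sorted_wrt (<) i" and si: "set i \<subseteq> {..<n}" and l: "length i = length e"
    and pos: "\<forall>x\<in>set e. 0 < x"
  shows "nzidx (expvec n i e) = i"
proof -
  have d: "distinct i" and so: "sorted i" using s strict_sorted_iff by blast+
  have "set (nzidx (expvec n i e)) = set i"
  proof (rule set_eqI)
    fix m
    show "m \<in> set (nzidx (expvec n i e)) \<longleftrightarrow> m \<in> set i"
    proof (cases "m \<in> set i")
      case True
      then obtain t where t: "t < length i" "i ! t = m" by (auto simp: in_set_conv_nth)
      have "m < n" using True si by auto
      moreover have "expvec n i e ! m = e ! t" using expvec_nth_in[OF d t(1)] t \<open>m < n\<close> by simp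
      moreover have "0 < e ! t" using pos t l by auto
      ultimately show ?thesis using True by (simp add: nzidx_set)
    next
      case False
      then show ?thesis using expvec_nth_out[of m n i e] by (auto simp: nzidx_set)
    qed
  qed
  then show ?thesis
    using sorted_distinct_set_unique[of "nzidx (expvec n i e)" i] nzidx_sorted[of "expvec n i e"]
      strict_sorted_iff d so by auto
qed

lemma flat_expvec:
  assumes s: "sorted_wrt (<) i" and si: "set i \<subseteq> {..<n}" and l: "length i = length e"
    and pos: "\<forall>x\<in>set e. 0 < x"
  shows "flat (expvec n i e) = e"
proof -
  have d: "distinct i" using s strict_sorted_iff by blast
  have "flat (expvec n i e) = map (nth (expvec n i e)) i"
    by (simp add: flat_nth nzidx_expvec[OF assms])
  also have "\<dots> = e"
  proof (rule nth_equalityI)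
    show "length (map (nth (expvec n i e)) i) = length e" using l by simp
    fix t assume "t < length (map (nth (expvec n i e)) i)"
    then have t: "t < length i" by simp
    then have "i ! t < n" using si nth_mem by blast
    then show "map (nth (expvec n i e)) i ! t = e ! t" using expvec_nth_in[OF d t] t by simp
  qed
  finally show ?thesis .
qed

lemma flat_pos: "\<forall>x\<in>set (flat b). 0 < x" by (auto simp: flat_def)

lemma qsym_iff:
  "qsym_cond n f \<longleftrightarrow> (\<forall>b b'. length b = n \<longrightarrow> length b' = n \<longrightarrow> flat b = flat b' \<longrightarrow> f b = f b')"
proof
  assume q: "qsym_cond n f"
  show "\<forall>b b'. length b = n \<longrightarrow> length b' = n \<longrightarrow> flat b = flat b' \<longrightarrow> f b = f b'"
  proof (intro allI impI)
    fix b b' assume lb: "length b = n" and lb': "length b' = n" and fl: "flat b = flat b'"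
    have A: "length (nzidx b) = length (flat b)" "length (nzidx b') = length (flat b)"
      using length_nzidx fl by metis+
    have B: "set (nzidx b) \<subseteq> {..<n}" "set (nzidx b') \<subseteq> {..<n}" using lb lb' by (auto simp: nzidx_set)
    have "f (expvec n (nzidx b) (flat b)) = f (expvec n (nzidx b') (flat b))"
      using q A B nzidx_sorted flat_pos unfolding qsym_cond_def by blast
    then show "f b = f b'" using expvec_nzidx[OF lb] expvec_nzidx[OF lb'] fl by simp
  qed
next
  assume h: "\<forall>b b'. length b = n \<longrightarrow> length b' = n \<longrightarrow> flat b = flat b' \<longrightarrow> f b = f b'"
  show "qsym_cond n f" unfolding qsym_cond_def
  proof (intro allI impI)
    fix e i j :: "nat list"
    assume a: "length i = length e \<and> length j = length e \<and> sorted_wrt (<) i \<and> sorted_wrt (<) j \<and>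
        set i \<subseteq> {..<n} \<and> set j \<subseteq> {..<n} \<and> (\<forall>x\<in>set e. 0 < x)"
    then have "flat (expvec n i e) = e" "flat (expvec n j e) = e" using flat_expvec by auto
    then show "f (expvec n i e) = f (expvec n j e)" using h by simp
  qed
qed

lemma lincomb_eq:
  assumes "finite A" "{i. c i \<noteq> 0} \<subseteq> A"
  shows "lincomb c v m = (\<Sum>i\<in>A. c i * v i m)"
  unfolding lincomb_def by (rule sum.mono_neutral_left) (use assms in auto)

lemma Z_basis_tri:
  fixes I :: "'i set" and v :: "'i \<Rightarrow> 'm \<Rightarrow> int" and S and D :: "'m set"
    and \<kappa> :: "'m \<Rightarrow> 'i" and \<rho> :: "'i \<Rightarrow> nat" and std :: "'i \<Rightarrow> 'm" and N :: nat
  assumes S_eq: "S = {p. finite {m. p m \<noteq> 0} \<and> (\<forall>m. p m \<noteq> 0 \<longrightarrow> m \<in> D) \<and>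
                     (\<forall>m\<in>D. \<forall>m'\<in>D. \<kappa> m = \<kappa> m' \<longrightarrow> p m = p m')}"
    and \<kappa>I: "\<And>m. m \<in> D \<Longrightarrow> \<kappa> m \<in> I"
    and stdD: "\<And>i. i \<in> I \<Longrightarrow> std i \<in> D" and \<kappa>std: "\<And>i. i \<in> I \<Longrightarrow> \<kappa> (std i) = i"
    and vS: "\<And>i. i \<in> I \<Longrightarrow> v i \<in> S"
    and vstd: "\<And>i. i \<in> I \<Longrightarrow> v i (std i) = 1"
    and tri: "\<And>i m. i \<in> I \<Longrightarrow> v i m \<noteq> 0 \<Longrightarrow> \<kappa> m \<noteq> i \<Longrightarrow> \<rho> i < \<rho> (\<kappa> m)"
    and bnd: "\<And>i. i \<in> I \<Longrightarrow> \<rho> i \<le> N"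
  shows "Z_basis I v S"
proof -
  have vfin: "finite {m. v i m \<noteq> 0}" and vD: "\<And>m. v i m \<noteq> 0 \<Longrightarrow> m \<in> D"
    and vinv: "\<And>m m'. m \<in> D \<Longrightarrow> m' \<in> D \<Longrightarrow> \<kappa> m = \<kappa> m' \<Longrightarrow> v i m = v i m'"
    if "i \<in> I" for i
  proof -
    have "v i \<in> S" using vS[OF that] .
    then have H: "finite {m. v i m \<noteq> 0} \<and> (\<forall>m. v i m \<noteq> 0 \<longrightarrow> m \<in> D) \<and>
                     (\<forall>m\<in>D. \<forall>m'\<in>D. \<kappa> m = \<kappa> m' \<longrightarrow> v i m = v i m')"
      unfolding S_eq by (rule CollectD)
    show "finite {m. v i m \<noteq> 0}" using H by blast
    show "\<And>m. v i m \<noteq> 0 \<Longrightarrow> m \<in> D" using H by blast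
    show "\<And>m m'. m \<in> D \<Longrightarrow> m' \<in> D \<Longrightarrow> \<kappa> m = \<kappa> m' \<Longrightarrow> v i m = v i m'" using H by blast
  qed
  have indep: "\<forall>i. c i = 0" if fc: "finite {i. c i \<noteq> 0}" and sub: "{i. c i \<noteq> 0} \<subseteq> I"
    and lc: "lincomb c v = (\<lambda>_. 0)" for c
  proof (rule ccontr)
    assume "\<not> (\<forall>i. c i = 0)"
    then obtain i0 where "c i0 \<noteq> 0" by auto
    then obtain i where ci: "c i \<noteq> 0" and imin: "\<And>j. c j \<noteq> 0 \<Longrightarrow> \<rho> i \<le> \<rho> j"
      using ex_has_least_nat[of "\<lambda>i. c i \<noteq> 0" i0 \<rho>] by blast
    have iI: "i \<in> I" using ci sub by auto
    have "0 = lincomb c v (std i)" using lc by metis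
    also have "\<dots> = (\<Sum>j\<in>{i. c i \<noteq> 0}. c j * v j (std i))" by (simp add: lincomb_def)
    also have "\<dots> = (\<Sum>j\<in>{i. c i \<noteq> 0}. if j = i then c j else 0)"
    proof (rule sum.cong)
      fix j assume j: "j \<in> {i. c i \<noteq> 0}"
      show "c j * v j (std i) = (if j = i then c j else 0)"
      proof (cases "j = i")
        case True then show ?thesis using vstd[OF iI] by simp
      next
        case False
        have jI: "j \<in> I" using j sub by auto
        have "v j (std i) = 0"
        proof (rule ccontr)
          assume "v j (std i) \<noteq> 0"
          from tri[OF jI this] \<kappa>std[OF iI] False have "\<rho> j < \<rho> i" by auto
          with imin[of j] j show False by auto
        qed
        with False show ?thesis by simp
      qed
    qed simp
    also have "\<dots> = c i" using fc ci by (simp add: sum.delta')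
    finally show False using ci by simp
  qed
  define P where "P d \<longleftrightarrow> (\<forall>p\<in>S. (\<forall>m. p m \<noteq> 0 \<longrightarrow> d \<le> \<rho> (\<kappa> m)) \<longrightarrow>
      (\<exists>c. finite {i. c i \<noteq> 0} \<and> {i. c i \<noteq> 0} \<subseteq> I \<and> lincomb c v = p))" for d
  have "P 0"
  proof (rule inc_induct[of 0 "Suc N" P])
    show "0 \<le> Suc N" by simp
  next
    show "P (Suc N)" unfolding P_def
    proof (intro ballI impI)
      fix p assume pS: "p \<in> S" and sup: "\<forall>m. p m \<noteq> 0 \<longrightarrow> Suc N \<le> \<rho> (\<kappa> m)"
      have "p = (\<lambda>_. 0)"
      proof
        fix m show "p m = 0"
        proof (rule ccontr)
          assume "p m \<noteq> 0"
          then have "m \<in> D" using pS unfolding S_eq by auto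
          then have "\<rho> (\<kappa> m) \<le> N" using bnd \<kappa>I by blast
          with sup \<open>p m \<noteq> 0\<close> show False by fastforce
        qed
      qed
      then show "\<exists>c. finite {i. c i \<noteq> 0} \<and> {i. c i \<noteq> 0} \<subseteq> I \<and> lincomb c v = p"
        by (intro exI[of _ "\<lambda>_. 0"]) (simp add: lincomb_def)
    qed
  next
    fix d assume IH: "P (Suc d)"
    show "P d" unfolding P_def
    proof (intro ballI impI)
      fix p assume pS: "p \<in> S" and sup: "\<forall>m. p m \<noteq> 0 \<longrightarrow> d \<le> \<rho> (\<kappa> m)"
      have pfin: "finite {m. p m \<noteq> 0}" and pD: "\<And>m. p m \<noteq> 0 \<Longrightarrow> m \<in> D"
        and pinv: "\<And>m m'. m \<in> D \<Longrightarrow> m' \<in> D \<Longrightarrow> \<kappa> m = \<kappa> m' \<Longrightarrow> p m = p m'"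
        using pS unfolding S_eq by (blast, blast, blast)
      define F where "F = \<kappa> ` {m. p m \<noteq> 0 \<and> \<rho> (\<kappa> m) = d}"
      have Ffin: "finite F" unfolding F_def using pfin by (auto intro: finite_subset)
      have FI: "F \<subseteq> I" unfolding F_def using pD \<kappa>I by auto
      have Fd: "\<And>i. i \<in> F \<Longrightarrow> \<rho> i = d" unfolding F_def by auto
      define c0 where "c0 i = (if i \<in> F then p (std i) else 0)" for i
      have c0sub: "{i. c0 i \<noteq> 0} \<subseteq> F" unfolding c0_def by auto
      have lc0: "lincomb c0 v m = (\<Sum>i\<in>F. p (std i) * v i m)" for m
      proof -
        have "lincomb c0 v m = (\<Sum>i\<in>F. c0 i * v i m)" by (rule lincomb_eq[OF Ffin c0sub])
        also have "\<dots> = (\<Sum>i\<in>F. p (std i) * v i m)" by (rule sum.cong) (simp_all add: c0_def)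
        finally show ?thesis .
      qed
      define q where "q m = p m - lincomb c0 v m" for m
      have qsupp: "p m \<noteq> 0 \<or> (\<exists>i\<in>F. v i m \<noteq> 0)" if "q m \<noteq> 0" for m
      proof (rule ccontr)
        assume "\<not> ?thesis"
        then have "lincomb c0 v m = 0" unfolding lc0 by (auto intro!: sum.neutral)
        with that \<open>\<not> ?thesis\<close> show False by (simp add: q_def)
      qed
      have qD: "m \<in> D" if "q m \<noteq> 0" for m
        using qsupp[OF that] pD vD FI by blast
      have qfin: "finite {m. q m \<noteq> 0}"
      proof (rule finite_subset)
        show "{m. q m \<noteq> 0} \<subseteq> {m. p m \<noteq> 0} \<union> (\<Union>i\<in>F. {m. v i m \<noteq> 0})" using qsupp by blast
        show "finite ({m. p m \<noteq> 0} \<union> (\<Union>i\<in>F. {m. v i m \<noteq> 0}))"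
          using pfin Ffin vfin FI by auto
      qed
      have qinv: "q m = q m'" if "m \<in> D" "m' \<in> D" "\<kappa> m = \<kappa> m'" for m m'
      proof -
        have "lincomb c0 v m = lincomb c0 v m'" unfolding lc0
          by (rule sum.cong) (use vinv FI that in auto)
        then show ?thesis using pinv[OF that] by (simp add: q_def)
      qed
      have qS: "q \<in> S" unfolding S_eq using qfin qD qinv by (intro CollectI conjI allI impI ballI) blast+
      have qsup: "\<forall>m. q m \<noteq> 0 \<longrightarrow> Suc d \<le> \<rho> (\<kappa> m)"
      proof (intro allI impI)
        fix m assume qm: "q m \<noteq> 0"
        have mD: "m \<in> D" using qD[OF qm] .
        show "Suc d \<le> \<rho> (\<kappa> m)"
        proof (rule ccontr)
          assume "\<not> Suc d \<le> \<rho> (\<kappa> m)"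
          then have le: "\<rho> (\<kappa> m) \<le> d" by simp
          have z: "v i m = 0" if "i \<in> F" "i \<noteq> \<kappa> m" for i
          proof (rule ccontr)
            assume "v i m \<noteq> 0"
            from tri[OF _ this] that FI have "\<rho> i < \<rho> (\<kappa> m)" by auto
            with Fd[OF that(1)] le show False by simp
          qed
          have lcm: "lincomb c0 v m = (\<Sum>i\<in>F. if i = \<kappa> m then p (std i) * v i m else 0)"
            unfolding lc0 by (rule sum.cong) (use z in auto)
          show False
          proof (cases "\<kappa> m \<in> F")
            case True
            have kI: "\<kappa> m \<in> I" using True FI by auto
            have "lincomb c0 v m = p (std (\<kappa> m)) * v (\<kappa> m) m"
              using lcm Ffin True by (simp add: sum.delta')
            also have "v (\<kappa> m) m = 1"
              using vinv[OF kI mD stdD[OF kI]] \<kappa>std[OF kI] vstd[OF kI] by simp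
            also have "p (std (\<kappa> m)) = p m"
              using pinv[OF stdD[OF kI] mD] \<kappa>std[OF kI] by simp
            finally show False using qm by (simp add: q_def)
          next
            case False
            then have "lincomb c0 v m = 0" using lcm Ffin by (simp add: sum.delta')
            moreover have "p m = 0"
            proof (rule ccontr)
              assume "p m \<noteq> 0"
              with sup le have "\<rho> (\<kappa> m) = d" by fastforce
              with \<open>p m \<noteq> 0\<close> False show False unfolding F_def by auto
            qed
            ultimately show False using qm by (simp add: q_def)
          qed
        qed
      qed
      obtain c1 where c1: "finite {i. c1 i \<noteq> 0}" "{i. c1 i \<noteq> 0} \<subseteq> I" "lincomb c1 v = q"
        using IH qS qsup unfolding P_def by blast
      define c where "c i = c0 i + c1 i" for i
      have csub: "{i. c i \<noteq> 0} \<subseteq> F \<union> {i. c1 i \<noteq> 0}" using c0sub unfolding c_def by auto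
      have cfin: "finite (F \<union> {i. c1 i \<noteq> 0})" using Ffin c1(1) by simp
      have "lincomb c v m = p m" for m
      proof -
        have "lincomb c v m = (\<Sum>i\<in>F \<union> {i. c1 i \<noteq> 0}. c i * v i m)"
          by (rule lincomb_eq[OF cfin csub])
        also have "\<dots> = (\<Sum>i\<in>F \<union> {i. c1 i \<noteq> 0}. c0 i * v i m) + (\<Sum>i\<in>F \<union> {i. c1 i \<noteq> 0}. c1 i * v i m)"
          by (simp add: c_def distrib_right sum.distrib)
        also have "\<dots> = lincomb c0 v m + lincomb c1 v m"
        proof -
          have "{i. c0 i \<noteq> 0} \<subseteq> F \<union> {i. c1 i \<noteq> 0}" using c0sub by blast
          then show ?thesis using lincomb_eq[OF cfin, of c0 v m] lincomb_eq[OF cfin, of c1 v m] by simp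
        qed
        also have "\<dots> = p m" using c1(3) by (simp add: q_def)
        finally show ?thesis .
      qed
      then show "\<exists>c. finite {i. c i \<noteq> 0} \<and> {i. c i \<noteq> 0} \<subseteq> I \<and> lincomb c v = p"
        using csub cfin FI c1(2) by (intro exI[of _ c]) (auto intro: finite_subset)
    qed
  qed
  then have span: "\<exists>c. finite {i. c i \<noteq> 0} \<and> {i. c i \<noteq> 0} \<subseteq> I \<and> lincomb c v = p" if "p \<in> S" for p
    using that unfolding P_def by auto
  show ?thesis unfolding Z_basis_def using vS indep span by blast
qed

lemma nzpos_rep:
  assumes "composition a"
  shows "nzpos (replicate m 0 @ a) = [Suc m..<Suc (m + length a)]"
proof -
  have "[1..<length (replicate m 0 @ a) + 1] = [1..<Suc m] @ [Suc m..<Suc (m + length a)]"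
    using upt_add_eq_append[of 1 "Suc m" "length a"] by (simp del: upt_Suc)
  moreover have "filter (\<lambda>k. (replicate m 0 @ a) ! (k - 1) \<noteq> 0) [1..<Suc m] = []"
    by (rule filter_False) (auto simp: nth_append)
  moreover have "filter (\<lambda>k. (replicate m 0 @ a) ! (k - 1) \<noteq> 0) [Suc m..<Suc (m + length a)]
      = [Suc m..<Suc (m + length a)]"
    by (rule filter_True) (use assms in \<open>auto simp: nth_append composition_def\<close>)
  ultimately show ?thesis unfolding nzpos_def by simp
qed

lemma flat_rep: "composition a \<Longrightarrow> flat (replicate m 0 @ a) = a"
  by (auto simp: flat_def composition_def intro: filter_True)

definition BLK :: "nat \<Rightarrow> nat \<Rightarrow> nat \<Rightarrow> nat list \<Rightarrow> bool list \<Rightarrow> bool" where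
  "BLK x p q b red \<longleftrightarrow> (\<Sum>k\<in>{p<..q}. b ! (k - 1)) = x + card {k\<in>{p<..q}. red ! (k - 1)} \<and>
     (\<exists>m\<in>{p<..q}. b ! (m - 1) \<noteq> 0 \<and> \<not> red ! (m - 1) \<and> (\<forall>k\<in>{p<..<m}. b ! (k - 1) = 0))"

definition IOTA :: "nat \<Rightarrow> nat list \<Rightarrow> nat list \<Rightarrow> bool list \<Rightarrow> (nat \<Rightarrow> nat) \<Rightarrow> bool" where
  "IOTA m a b red \<iota> \<longleftrightarrow> \<iota> 0 = 0 \<and> (\<forall>j<length a. \<iota> j < \<iota> (Suc j)) \<and>
     (\<forall>j\<in>{1..length a}. \<iota> j \<le> m + j) \<and>
     (\<forall>k. \<iota> (length a) < k \<and> k \<le> m + length a \<longrightarrow> b ! (k - 1) = 0) \<and>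
     (\<forall>j\<in>{1..length a}. BLK (a ! (j - 1)) (\<iota> (j - 1)) (\<iota> j) b red)"

definition GL :: "nat \<Rightarrow> nat list \<Rightarrow> nat list \<Rightarrow> bool list \<Rightarrow> bool" where
  "GL m a b red \<longleftrightarrow> length b = m + length a \<and> nzok b red \<and> (\<exists>\<iota>. IOTA m a b red \<iota>)"

lemma nzok_iff: "nzok b red \<longleftrightarrow> length red = length b \<and> (\<forall>t<length b. red ! t \<longrightarrow> 0 < b ! t)"
  unfolding nzok_def list_all2_conv_all_nth by auto

lemma glide_GL:
  assumes a: "composition a"
  shows "glide (replicate m 0 @ a) b red \<longleftrightarrow> GL m a b red"
proof -
  have np: "nzpos (replicate m 0 @ a) = [Suc m..<Suc (m + length a)]" by (rule nzpos_rep[OF a])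
  have fl: "flat (replicate m 0 @ a) = a" by (rule flat_rep[OF a])
  have ln: "length (nzpos (replicate m 0 @ a)) = length a" by (simp add: np del: upt_Suc)
  have nth: "nzpos (replicate m 0 @ a) ! (j - 1) = m + j" if "j \<in> {1..length a}" for j
    using that by (simp add: np del: upt_Suc)
  have "(\<forall>j\<in>{1..length a}. \<iota> j \<le> nzpos (replicate m 0 @ a) ! (j - 1)) \<longleftrightarrow>
        (\<forall>j\<in>{1..length a}. \<iota> j \<le> m + j)" for \<iota> using nth by auto
  then show ?thesis
    unfolding glide_def GL_def IOTA_def BLK_def Let_def ln fl nzok_iff
    by (simp add: ac_simps) (intro iffI; elim conjE exE; intro conjI; (assumption | blast | simp)?)
qed

lemma BLK_drop:
  assumes sb: "s \<le> length b" and sr: "s \<le> length red"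
  shows "BLK x p q (drop s b) (drop s red) \<longleftrightarrow> BLK x (p + s) (q + s) b red"
proof -
  have eb: "drop s b ! (k - 1) = b ! (k + s - 1)" if "0 < k" for k using sb that by (simp add: add.commute)
  have er: "drop s red ! (k - 1) = red ! (k + s - 1)" if "0 < k" for k using sr that by (simp add: add.commute)
  have img: "(\<lambda>k. k + s) ` {p<..q} = {p + s<..q + s}"
  proof
    show "(\<lambda>k. k + s) ` {p<..q} \<subseteq> {p + s<..q + s}" by auto
    show "{p + s<..q + s} \<subseteq> (\<lambda>k. k + s) ` {p<..q}"
    proof
      fix k assume "k \<in> {p + s<..q + s}"
      then have "k - s \<in> {p<..q}" "k = k - s + s" by auto
      then show "k \<in> (\<lambda>k. k + s) ` {p<..q}" by blast
    qed
  qed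
  have inj: "inj_on (\<lambda>k. k + s) A" for A by (auto simp: inj_on_def)
  have S: "(\<Sum>k\<in>{p<..q}. drop s b ! (k - 1)) = (\<Sum>k\<in>{p + s<..q + s}. b ! (k - 1))"
  proof -
    have "(\<Sum>k\<in>{p<..q}. drop s b ! (k - 1)) = (\<Sum>k\<in>{p<..q}. b ! (k + s - 1))"
    proof (rule sum.cong)
      fix k assume "k \<in> {p<..q}" then show "drop s b ! (k - 1) = b ! (k + s - 1)" using eb[of k] by simp
    qed simp
    also have "\<dots> = (\<Sum>k\<in>(\<lambda>k. k + s) ` {p<..q}. b ! (k - 1))"
      by (simp add: sum.reindex[OF inj])
    finally show ?thesis by (simp add: img)
  qed
  have Cd: "card {k\<in>{p<..q}. drop s red ! (k - 1)} = card {k\<in>{p + s<..q + s}. red ! (k - 1)}"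
  proof -
    have "{k\<in>{p<..q}. drop s red ! (k - 1)} = {k\<in>{p<..q}. red ! (k + s - 1)}"
    proof (rule Collect_cong)
      fix k show "(k \<in> {p<..q} \<and> drop s red ! (k - 1)) = (k \<in> {p<..q} \<and> red ! (k + s - 1))"
        using er[of k] by auto
    qed
    moreover have "(\<lambda>k. k + s) ` {k\<in>{p<..q}. red ! (k + s - 1)} = {k\<in>{p + s<..q + s}. red ! (k - 1)}"
    proof
      show "(\<lambda>k. k + s) ` {k\<in>{p<..q}. red ! (k + s - 1)} \<subseteq> {k\<in>{p + s<..q + s}. red ! (k - 1)}" by auto
      show "{k\<in>{p + s<..q + s}. red ! (k - 1)} \<subseteq> (\<lambda>k. k + s) ` {k\<in>{p<..q}. red ! (k + s - 1)}"
      proof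
        fix k assume "k \<in> {k\<in>{p + s<..q + s}. red ! (k - 1)}"
        then have "k - s \<in> {k\<in>{p<..q}. red ! (k + s - 1)}" "k = k - s + s" by auto
        then show "k \<in> (\<lambda>k. k + s) ` {k\<in>{p<..q}. red ! (k + s - 1)}" by blast
      qed
    qed
    ultimately show ?thesis using card_image[OF inj, of "{k\<in>{p<..q}. red ! (k + s - 1)}"] by simp
  qed
  have X: "(\<exists>m\<in>{p<..q}. drop s b ! (m - 1) \<noteq> 0 \<and> \<not> drop s red ! (m - 1) \<and> (\<forall>k\<in>{p<..<m}. drop s b ! (k - 1) = 0))
      \<longleftrightarrow> (\<exists>m\<in>{p + s<..q + s}. b ! (m - 1) \<noteq> 0 \<and> \<not> red ! (m - 1) \<and> (\<forall>k\<in>{p + s<..<m}. b ! (k - 1) = 0))"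
  proof
    assume "\<exists>m\<in>{p<..q}. drop s b ! (m - 1) \<noteq> 0 \<and> \<not> drop s red ! (m - 1) \<and> (\<forall>k\<in>{p<..<m}. drop s b ! (k - 1) = 0)"
    then obtain m where m: "m \<in> {p<..q}" "drop s b ! (m - 1) \<noteq> 0" "\<not> drop s red ! (m - 1)"
      "\<forall>k\<in>{p<..<m}. drop s b ! (k - 1) = 0" by blast
    show "\<exists>m\<in>{p + s<..q + s}. b ! (m - 1) \<noteq> 0 \<and> \<not> red ! (m - 1) \<and> (\<forall>k\<in>{p + s<..<m}. b ! (k - 1) = 0)"
    proof (intro bexI[of _ "m + s"] conjI ballI)
      show "m + s \<in> {p + s<..q + s}" using m by auto
      show "b ! (m + s - 1) \<noteq> 0" using m eb[of m] by auto
      show "\<not> red ! (m + s - 1)" using m er[of m] by auto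
      fix k assume k: "k \<in> {p + s<..<m + s}"
      then have "k - s \<in> {p<..<m}" by auto
      with m(4) have "drop s b ! (k - s - 1) = 0" by blast
      with eb[of "k - s"] k show "b ! (k - 1) = 0" by auto
    qed
  next
    assume "\<exists>m\<in>{p + s<..q + s}. b ! (m - 1) \<noteq> 0 \<and> \<not> red ! (m - 1) \<and> (\<forall>k\<in>{p + s<..<m}. b ! (k - 1) = 0)"
    then obtain m where m: "m \<in> {p + s<..q + s}" "b ! (m - 1) \<noteq> 0" "\<not> red ! (m - 1)"
      "\<forall>k\<in>{p + s<..<m}. b ! (k - 1) = 0" by blast
    show "\<exists>m\<in>{p<..q}. drop s b ! (m - 1) \<noteq> 0 \<and> \<not> drop s red ! (m - 1) \<and> (\<forall>k\<in>{p<..<m}. drop s b ! (k - 1) = 0)"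
    proof (intro bexI[of _ "m - s"] conjI ballI)
      show "m - s \<in> {p<..q}" using m by auto
      show "drop s b ! (m - s - 1) \<noteq> 0" using m eb[of "m - s"] by auto
      show "\<not> drop s red ! (m - s - 1)" using m er[of "m - s"] by auto
      fix k assume k: "k \<in> {p<..<m - s}"
      then have "k + s \<in> {p + s<..<m}" by auto
      with m(4) have "b ! (k + s - 1) = 0" by blast
      with eb[of k] k show "drop s b ! (k - 1) = 0" by auto
    qed
  qed
  show ?thesis unfolding BLK_def S Cd X ..
qed

lemma iota_mono:
  fixes \<iota> :: "nat \<Rightarrow> nat"
  assumes "\<forall>j<l. \<iota> j < \<iota> (Suc j)" "i \<le> j" "j \<le> l"
  shows "\<iota> i \<le> \<iota> j"
  using assms(2,3)
proof (induction j)
  case 0 then show ?case by simp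
next
  case (Suc j)
  show ?case
  proof (cases "i = Suc j")
    case True then show ?thesis by simp
  next
    case False
    then have "\<iota> i \<le> \<iota> j" using Suc by auto
    moreover have "\<iota> j < \<iota> (Suc j)" using assms(1) Suc by auto
    ultimately show ?thesis by simp
  qed
qed

lemma GL_Nil: "GL m [] b red \<longleftrightarrow> length b = m \<and> nzok b red \<and> (\<forall>t<length b. b ! t = 0)"
proof
  assume "GL m [] b red"
  then obtain \<iota> where l: "length b = m" and nz: "nzok b red" and I: "IOTA m [] b red \<iota>"
    unfolding GL_def by auto
  have "b ! t = 0" if "t < length b" for t
    using I l that unfolding IOTA_def by (auto dest: spec[of _ "Suc t"])
  then show "length b = m \<and> nzok b red \<and> (\<forall>t<length b. b ! t = 0)" using l nz by auto
next
  assume h: "length b = m \<and> nzok b red \<and> (\<forall>t<length b. b ! t = 0)"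
  have "IOTA m [] b red (\<lambda>_. 0)" unfolding IOTA_def using h by auto
  then show "GL m [] b red" unfolding GL_def using h by auto
qed

lemma GL_Cons:
  "GL m (x # as) b red \<longleftrightarrow> (\<exists>s. 1 \<le> s \<and> s \<le> Suc m \<and> length b = m + Suc (length as) \<and>
      nzok b red \<and> BLK x 0 s b red \<and> GL (Suc m - s) as (drop s b) (drop s red))"
proof
  assume "GL m (x # as) b red"
  then obtain \<iota> where lb: "length b = m + Suc (length as)" and nz: "nzok b red"
    and I: "IOTA m (x # as) b red \<iota>" unfolding GL_def by auto
  have lr: "length red = length b" using nz by (simp add: nzok_iff)
  have i0: "\<iota> 0 = 0" and istep: "\<And>j. j < Suc (length as) \<Longrightarrow> \<iota> j < \<iota> (Suc j)"
    and ibd: "\<And>j. 1 \<le> j \<Longrightarrow> j \<le> Suc (length as) \<Longrightarrow> \<iota> j \<le> m + j"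
    and izero: "\<And>k. \<iota> (Suc (length as)) < k \<Longrightarrow> k \<le> m + Suc (length as) \<Longrightarrow> b ! (k - 1) = 0"
    and iblk: "\<And>j. 1 \<le> j \<Longrightarrow> j \<le> Suc (length as) \<Longrightarrow> BLK ((x # as) ! (j - 1)) (\<iota> (j - 1)) (\<iota> j) b red"
    using I unfolding IOTA_def by auto
  define s where "s = \<iota> 1"
  have s1: "1 \<le> s" using istep[of 0] i0 by (simp add: s_def)
  have sm: "s \<le> Suc m" using ibd[of 1] by (simp add: s_def)
  have blk: "BLK x 0 s b red" using iblk[of 1] i0 by (simp add: s_def)
  have sge: "s \<le> \<iota> j" if "1 \<le> j" "j \<le> Suc (length as)" for j
    using iota_mono[of "Suc (length as)" \<iota> 1 j] istep that by (auto simp: s_def)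
  have sb: "s \<le> length b" and sr: "s \<le> length red" using sm lb lr by auto
  define \<iota>' where "\<iota>' j = \<iota> (Suc j) - s" for j
  have I': "IOTA (Suc m - s) as (drop s b) (drop s red) \<iota>'"
    unfolding IOTA_def
  proof (intro conjI allI impI ballI)
    show "\<iota>' 0 = 0" by (simp add: \<iota>'_def s_def)
  next
    fix j assume "j < length as"
    then show "\<iota>' j < \<iota>' (Suc j)" using istep[of "Suc j"] sge[of "Suc j"] by (auto simp: \<iota>'_def)
  next
    fix j assume "j \<in> {1..length as}"
    then show "\<iota>' j \<le> Suc m - s + j" using ibd[of "Suc j"] sm by (auto simp: \<iota>'_def)
  next
    fix k assume k: "\<iota>' (length as) < k \<and> k \<le> Suc m - s + length as"
    have "\<iota> (Suc (length as)) < k + s" using k sge[of "Suc (length as)"] by (auto simp: \<iota>'_def)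
    moreover have "k + s \<le> m + Suc (length as)" using k sm by auto
    ultimately have "b ! (k + s - 1) = 0" using izero by blast
    moreover have "0 < k" using k by auto
    ultimately show "drop s b ! (k - 1) = 0" using sb by (simp add: add.commute)
  next
    fix j assume j: "j \<in> {1..length as}"
    have e1: "\<iota>' (j - 1) + s = \<iota> j" using j sge[of j] by (auto simp: \<iota>'_def)
    have e2: "\<iota>' j + s = \<iota> (Suc j)" using j sge[of "Suc j"] by (auto simp: \<iota>'_def)
    have e3: "(x # as) ! (Suc j - 1) = as ! (j - 1)" using j by (cases j) auto
    have "BLK (as ! (j - 1)) (\<iota> j) (\<iota> (Suc j)) b red" using iblk[of "Suc j"] j e3 by auto
    then show "BLK (as ! (j - 1)) (\<iota>' (j - 1)) (\<iota>' j) (drop s b) (drop s red)"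
      using BLK_drop[OF sb sr] e1 e2 by simp
  qed
  have "GL (Suc m - s) as (drop s b) (drop s red)"
    unfolding GL_def using I' lb sm nz by (auto simp: nzok_def)
  then show "\<exists>s. 1 \<le> s \<and> s \<le> Suc m \<and> length b = m + Suc (length as) \<and>
      nzok b red \<and> BLK x 0 s b red \<and> GL (Suc m - s) as (drop s b) (drop s red)"
    using s1 sm lb nz blk by blast
next
  assume "\<exists>s. 1 \<le> s \<and> s \<le> Suc m \<and> length b = m + Suc (length as) \<and>
      nzok b red \<and> BLK x 0 s b red \<and> GL (Suc m - s) as (drop s b) (drop s red)"
  then obtain s where s1: "1 \<le> s" and sm: "s \<le> Suc m" and lb: "length b = m + Suc (length as)"
    and nz: "nzok b red" and blk: "BLK x 0 s b red" and G: "GL (Suc m - s) as (drop s b) (drop s red)"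
    by blast
  have lr: "length red = length b" using nz by (simp add: nzok_iff)
  have sb: "s \<le> length b" and sr: "s \<le> length red" using sm lb lr by auto
  obtain \<iota>' where I': "IOTA (Suc m - s) as (drop s b) (drop s red) \<iota>'" using G unfolding GL_def by auto
  have i0: "\<iota>' 0 = 0" and istep: "\<And>j. j < length as \<Longrightarrow> \<iota>' j < \<iota>' (Suc j)"
    and ibd: "\<And>j. 1 \<le> j \<Longrightarrow> j \<le> length as \<Longrightarrow> \<iota>' j \<le> Suc m - s + j"
    and izero: "\<And>k. \<iota>' (length as) < k \<Longrightarrow> k \<le> Suc m - s + length as \<Longrightarrow> drop s b ! (k - 1) = 0"
    and iblk: "\<And>j. 1 \<le> j \<Longrightarrow> j \<le> length as \<Longrightarrow> BLK (as ! (j - 1)) (\<iota>' (j - 1)) (\<iota>' j) (drop s b) (drop s red)"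
    using I' unfolding IOTA_def by auto
  define \<iota> where "\<iota> j = (if j = 0 then 0 else \<iota>' (j - 1) + s)" for j
  have I: "IOTA m (x # as) b red \<iota>"
    unfolding IOTA_def
  proof (intro conjI allI impI ballI)
    show "\<iota> 0 = 0" by (simp add: \<iota>_def)
  next
    fix j assume j: "j < length (x # as)"
    show "\<iota> j < \<iota> (Suc j)"
    proof (cases j)
      case 0 then show ?thesis using s1 by (simp add: \<iota>_def i0)
    next
      case (Suc j') then show ?thesis using j istep[of j'] by (simp add: \<iota>_def)
    qed
  next
    fix j assume j: "j \<in> {1..length (x # as)}"
    then obtain j' where j': "j = Suc j'" by (cases j) auto
    show "\<iota> j \<le> m + j"
    proof (cases j')
      case 0 then show ?thesis using j' sm i0 by (simp add: \<iota>_def)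
    next
      case (Suc j'') then show ?thesis using j j' ibd[of j'] sm by (auto simp: \<iota>_def)
    qed
  next
    fix k assume k: "\<iota> (length (x # as)) < k \<and> k \<le> m + length (x # as)"
    then have k1: "\<iota>' (length as) < k - s" and k2: "k - s \<le> Suc m - s + length as" and ks: "s < k"
      using sm by (auto simp: \<iota>_def)
    have "drop s b ! (k - s - 1) = 0" using izero[OF k1 k2] .
    then show "b ! (k - 1) = 0" using sb ks by simp
  next
    fix j assume j: "j \<in> {1..length (x # as)}"
    then obtain j' where j': "j = Suc j'" by (cases j) auto
    show "BLK ((x # as) ! (j - 1)) (\<iota> (j - 1)) (\<iota> j) b red"
    proof (cases j')
      case 0 then show ?thesis using j' blk i0 by (simp add: \<iota>_def)
    next
      case (Suc j'')
      have jj: "1 \<le> j'" "j' \<le> length as" using j j' Suc by auto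
      have "BLK (as ! (j' - 1)) (\<iota>' (j' - 1) + s) (\<iota>' j' + s) b red"
        using iblk[OF jj] BLK_drop[OF sb sr] by simp
      then show ?thesis using j' Suc by (simp add: \<iota>_def)
    qed
  qed
  show "GL m (x # as) b red" unfolding GL_def using I lb nz by auto
qed

lemma colword_Nil[simp]: "colword [] rs = []" by (simp add: colword_def)
lemma colword_Cons[simp]: "colword (x # b) (r # rs) = (if x = 0 then colword b rs else (x, r) # colword b rs)"
  by (simp add: colword_def)

lemma colword_take_drop:
  "colword b red = colword (take s b) (take s red) @ colword (drop s b) (drop s red)"
  unfolding colword_def by (simp add: take_zip[symmetric] drop_zip[symmetric] filter_append[symmetric])

lemma filter_split:
  "filter P xs = u @ v \<Longrightarrow> \<exists>s\<le>length xs. filter P (take s xs) = u \<and> filter P (drop s xs) = v"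
proof (induction xs arbitrary: u)
  case Nil then show ?case by simp
next
  case (Cons x xs)
  show ?case
  proof (cases "u = []")
    case True then show ?thesis using Cons.prems by (intro exI[of _ 0]) simp
  next
    case False
    then obtain y u' where u: "u = y # u'" by (cases u) auto
    show ?thesis
    proof (cases "P x")
      case True
      then have "filter P xs = u' @ v" using Cons.prems u by simp
      then obtain s where "s \<le> length xs" "filter P (take s xs) = u'" "filter P (drop s xs) = v"
        using Cons.IH by blast
      then show ?thesis using True Cons.prems u by (intro exI[of _ "Suc s"]) auto
    next
      case False
      then have "filter P xs = u @ v" using Cons.prems by simp
      then obtain s where "s \<le> length xs" "filter P (take s xs) = u" "filter P (drop s xs) = v"
        using Cons.IH by blast
      then show ?thesis using False by (intro exI[of _ "Suc s"]) auto
    qed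
  qed
qed

lemma map_fst_colword: "length b = length red \<Longrightarrow> map fst (colword b red) = flat b"
  by (induction b red rule: list_induct2) (auto simp: flat_def)

lemma wsum_colword: "length b = length red \<Longrightarrow> wsum (colword b red) = sum_list b"
  by (induction b red rule: list_induct2) (auto simp: wsum_def)

lemma wred_colword: "nzok b red \<Longrightarrow> wred (colword b red) = ex red"
  unfolding nzok_def by (induction rule: list_all2_induct) (auto simp: wred_def ex_def)

lemma colword_nil_iff: "length b = length red \<Longrightarrow> colword b red = [] \<longleftrightarrow> (\<forall>t<length b. b ! t = 0)"
  by (induction b red rule: list_induct2) (auto simp: All_less_Suc2)

lemma FB_colword:
  "length bs = length rs \<Longrightarrow> (\<exists>t<length bs. bs ! t \<noteq> 0 \<and> \<not> rs ! t \<and> (\<forall>t'<t. bs ! t' = 0))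
    \<longleftrightarrow> (colword bs rs \<noteq> [] \<and> \<not> snd (hd (colword bs rs)))"
proof (induction bs rs rule: list_induct2)
  case Nil then show ?case by simp
next
  case (Cons x bs r rs)
  show ?case
  proof (cases "x = 0")
    case True
    have "(\<exists>t<length (x # bs). (x # bs) ! t \<noteq> 0 \<and> \<not> (r # rs) ! t \<and> (\<forall>t'<t. (x # bs) ! t' = 0))
        \<longleftrightarrow> (\<exists>t<length bs. bs ! t \<noteq> 0 \<and> \<not> rs ! t \<and> (\<forall>t'<t. bs ! t' = 0))"
      using True by (simp add: Ex_less_Suc2 All_less_Suc2)
    then show ?thesis using True Cons.IH by simp
  next
    case False
    have "(\<exists>t<length (x # bs). (x # bs) ! t \<noteq> 0 \<and> \<not> (r # rs) ! t \<and> (\<forall>t'<t. (x # bs) ! t' = 0))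
        \<longleftrightarrow> \<not> r"
      using False by (simp add: Ex_less_Suc2 All_less_Suc2)
    then show ?thesis using False by simp
  qed
qed

lemma ioc0: "{0<..s} = Suc ` {..<s}"
proof
  show "{0<..s} \<subseteq> Suc ` {..<s}"
  proof
    fix k assume "k \<in> {0<..s}" then have "k = Suc (k - 1)" "k - 1 < s" by auto
    then show "k \<in> Suc ` {..<s}" by blast
  qed
qed auto

lemma BLK_word:
  assumes sb: "s \<le> length b" and nz: "nzok b red"
  shows "BLK x 0 s b red \<longleftrightarrow> (colword (take s b) (take s red) \<noteq> [] \<and> \<not> snd (hd (colword (take s b) (take s red)))
      \<and> wsum (colword (take s b) (take s red)) = x + wred (colword (take s b) (take s red)))"
proof -
  define bs where "bs = take s b"
  define rs where "rs = take s red"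
  have lr: "length red = length b" using nz by (simp add: nzok_iff)
  have lbs: "length bs = s" and lrs: "length rs = s" using sb lr by (auto simp: bs_def rs_def)
  have nz': "nzok bs rs" using nz unfolding nzok_def bs_def rs_def by simp
  have bsn: "bs ! i = b ! i" if "i < s" for i using that by (simp add: bs_def)
  have rsn: "rs ! i = red ! i" if "i < s" for i using that by (simp add: rs_def)
  have injS: "inj_on Suc A" for A by simp
  have S: "(\<Sum>k\<in>{0<..s}. b ! (k - 1)) = sum_list bs"
  proof -
    have "(\<Sum>k\<in>{0<..s}. b ! (k - 1)) = (\<Sum>i<s. b ! i)" by (simp add: ioc0 sum.reindex)
    also have "\<dots> = (\<Sum>i<s. bs ! i)" by (rule sum.cong) (simp_all add: bsn)
    also have "\<dots> = sum_list bs" by (simp add: sum_list_sum_nth lbs atLeast0LessThan)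
    finally show ?thesis .
  qed
  have C: "card {k\<in>{0<..s}. red ! (k - 1)} = ex rs"
  proof -
    have "{k\<in>{0<..s}. red ! (k - 1)} = Suc ` {i. i < length rs \<and> rs ! i}"
    proof
      show "{k\<in>{0<..s}. red ! (k - 1)} \<subseteq> Suc ` {i. i < length rs \<and> rs ! i}"
      proof
        fix k assume k: "k \<in> {k\<in>{0<..s}. red ! (k - 1)}"
        then have "k = Suc (k - 1)" "k - 1 < length rs" "rs ! (k - 1)" using lrs rsn[of "k - 1"] by auto
        then show "k \<in> Suc ` {i. i < length rs \<and> rs ! i}" by blast
      qed
      show "Suc ` {i. i < length rs \<and> rs ! i} \<subseteq> {k\<in>{0<..s}. red ! (k - 1)}"
        using lrs rsn by auto
    qed
    then have "card {k\<in>{0<..s}. red ! (k - 1)} = card {i. i < length rs \<and> rs ! i}"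
      by (simp add: card_image)
    also have "\<dots> = ex rs" by (simp add: ex_def length_filter_conv_card)
    finally show ?thesis .
  qed
  have X: "(\<exists>m\<in>{0<..s}. b ! (m - 1) \<noteq> 0 \<and> \<not> red ! (m - 1) \<and> (\<forall>k\<in>{0<..<m}. b ! (k - 1) = 0))
      \<longleftrightarrow> (\<exists>t<length bs. bs ! t \<noteq> 0 \<and> \<not> rs ! t \<and> (\<forall>t'<t. bs ! t' = 0))"
  proof
    assume "\<exists>m\<in>{0<..s}. b ! (m - 1) \<noteq> 0 \<and> \<not> red ! (m - 1) \<and> (\<forall>k\<in>{0<..<m}. b ! (k - 1) = 0)"
    then obtain m where m: "m \<in> {0<..s}" "b ! (m - 1) \<noteq> 0" "\<not> red ! (m - 1)"
      "\<forall>k\<in>{0<..<m}. b ! (k - 1) = 0" by blast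
    show "\<exists>t<length bs. bs ! t \<noteq> 0 \<and> \<not> rs ! t \<and> (\<forall>t'<t. bs ! t' = 0)"
    proof (intro exI[of _ "m - 1"] conjI allI impI)
      show "m - 1 < length bs" using m lbs by auto
      show "bs ! (m - 1) \<noteq> 0" using m bsn[of "m - 1"] by auto
      have ms: "m - 1 < s" using m(1) by auto
      show "\<not> rs ! (m - 1)" using m(3) rsn[OF ms] by simp
      fix t' assume t': "t' < m - 1"
      then have "Suc t' \<in> {0<..<m}" by auto
      then have "b ! t' = 0" using m(4) by fastforce
      then show "bs ! t' = 0" using bsn[of t'] t' m by auto
    qed
  next
    assume "\<exists>t<length bs. bs ! t \<noteq> 0 \<and> \<not> rs ! t \<and> (\<forall>t'<t. bs ! t' = 0)"
    then obtain t where t: "t < length bs" "bs ! t \<noteq> 0" "\<not> rs ! t" "\<forall>t'<t. bs ! t' = 0" by blast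
    show "\<exists>m\<in>{0<..s}. b ! (m - 1) \<noteq> 0 \<and> \<not> red ! (m - 1) \<and> (\<forall>k\<in>{0<..<m}. b ! (k - 1) = 0)"
    proof (intro bexI[of _ "Suc t"] conjI ballI)
      show "Suc t \<in> {0<..s}" using t lbs by auto
      show "b ! (Suc t - 1) \<noteq> 0" using t bsn[of t] lbs by auto
      show "\<not> red ! (Suc t - 1)" using t rsn[of t] lbs by auto
      fix k assume k: "k \<in> {0<..<Suc t}"
      then have "bs ! (k - 1) = 0" using t(4) by auto
      then show "b ! (k - 1) = 0" using bsn[of "k - 1"] k t lbs by auto
    qed
  qed
  have W1: "wsum (colword bs rs) = sum_list bs" using wsum_colword lbs lrs by simp
  have W2: "wred (colword bs rs) = ex rs" using wred_colword[OF nz'] .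
  show ?thesis
    unfolding BLK_def S C X FB_colword[OF lbs[folded lrs]] W1 W2 bs_def[symmetric] rs_def[symmetric]
    by auto
qed

lemma nzok_take_drop: "nzok b red \<Longrightarrow> nzok (take s b) (take s red) \<and> nzok (drop s b) (drop s red)"
  unfolding nzok_def by simp

lemma GL_ok: "GL m a b red \<longleftrightarrow> length b = m + length a \<and> nzok b red \<and> ok a (colword b red)"
proof (induction a arbitrary: m b red)
  case Nil
  show ?case
  proof -
    have "nzok b red \<Longrightarrow> colword b red = [] \<longleftrightarrow> (\<forall>t<length b. b ! t = 0)"
      by (rule colword_nil_iff) (simp add: nzok_iff)
    then show ?thesis by (auto simp: GL_Nil)
  qed
next
  case (Cons x as)
  show ?case
  proof
    assume "GL m (x # as) b red"
    then obtain s where s1: "1 \<le> s" and sm: "s \<le> Suc m" and lb: "length b = m + Suc (length as)"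
      and nz: "nzok b red" and blk: "BLK x 0 s b red" and G: "GL (Suc m - s) as (drop s b) (drop s red)"
      unfolding GL_Cons by blast
    have sb: "s \<le> length b" using sm lb by simp
    have okv: "ok as (colword (drop s b) (drop s red))" using G Cons.IH by blast
    have u: "colword (take s b) (take s red) \<noteq> [] \<and> \<not> snd (hd (colword (take s b) (take s red)))
      \<and> wsum (colword (take s b) (take s red)) = x + wred (colword (take s b) (take s red))"
      using blk BLK_word[OF sb nz] by blast
    have "ok (x # as) (colword b red)"
      using colword_take_drop[of b red s] u okv by auto
    then show "length b = m + length (x # as) \<and> nzok b red \<and> ok (x # as) (colword b red)"
      using lb nz by simp
  next
    assume h: "length b = m + length (x # as) \<and> nzok b red \<and> ok (x # as) (colword b red)"
    then have lb: "length b = m + Suc (length as)" and nz: "nzok b red" by auto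
    have lr: "length red = length b" using nz by (simp add: nzok_iff)
    obtain u v where uv: "colword b red = u @ v" "u \<noteq> []" "\<not> snd (hd u)" "wsum u = x + wred u" "ok as v"
      using h by auto
    obtain s where s: "s \<le> length (zip b red)" "filter (\<lambda>p. fst p \<noteq> 0) (take s (zip b red)) = u"
      "filter (\<lambda>p. fst p \<noteq> 0) (drop s (zip b red)) = v"
      using filter_split[of _ "zip b red" u v] uv(1) unfolding colword_def by blast
    have cu: "colword (take s b) (take s red) = u" and cv: "colword (drop s b) (drop s red) = v"
      using s by (simp_all add: colword_def take_zip drop_zip)
    have sb: "s \<le> length b" using s lr by simp
    have s1: "1 \<le> s"
    proof (rule ccontr)
      assume "\<not> 1 \<le> s" then have "s = 0" by simp
      then show False using cu uv(2) by simp
    qed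
    have "length as \<le> length v" using ok_len[OF uv(5)] by simp
    also have "length v \<le> length (drop s b)"
      unfolding cv[symmetric] colword_def by (rule order_trans[OF length_filter_le]) simp
    finally have "length as \<le> length b - s" by simp
    then have sm: "s \<le> Suc m" using lb sb by linarith
    have blk: "BLK x 0 s b red" using BLK_word[OF sb nz] cu uv by simp
    have "GL (Suc m - s) as (drop s b) (drop s red)"
      using Cons.IH cv uv(5) nzok_take_drop[OF nz] lb sm by simp
    then show "GL m (x # as) b red" unfolding GL_Cons using s1 sm lb nz blk by blast
  qed
qed

fun mkred :: "nat list \<Rightarrow> (nat \<times> bool) list \<Rightarrow> bool list" where
  "mkred [] w = []"
| "mkred (x # b) w = (if x = 0 then False # mkred b w else snd (hd w) # mkred b (tl w))"

lemma mkred: "map fst w = flat b \<Longrightarrow> colword b (mkred b w) = w \<and> nzok b (mkred b w)"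
proof (induction b arbitrary: w)
  case Nil then show ?case by (simp add: flat_def nzok_def)
next
  case (Cons x b)
  show ?case
  proof (cases "x = 0")
    case True
    then have "map fst w = flat b" using Cons.prems by (simp add: flat_def)
    then show ?thesis using Cons.IH True by (simp add: nzok_def)
  next
    case False
    then have "map fst w = x # flat b" using Cons.prems by (simp add: flat_def)
    then obtain r w' where w: "w = (x, r) # w'" "map fst w' = flat b" by (cases w) auto
    then show ?thesis using Cons.IH[OF w(2)] False by (simp add: nzok_def)
  qed
qed

lemma colword_inj: "nzok b r1 \<Longrightarrow> nzok b r2 \<Longrightarrow> colword b r1 = colword b r2 \<Longrightarrow> r1 = r2"
proof (induction b arbitrary: r1 r2)
  case Nil then show ?case by (simp add: nzok_def)
next
  case (Cons x b)
  obtain h1 t1 where r1: "r1 = h1 # t1" "nzok b t1" "h1 \<longrightarrow> 0 < x"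
    using Cons.prems(1) unfolding nzok_def by (auto simp: list_all2_Cons1)
  obtain h2 t2 where r2: "r2 = h2 # t2" "nzok b t2" "h2 \<longrightarrow> 0 < x"
    using Cons.prems(2) unfolding nzok_def by (auto simp: list_all2_Cons1)
  show ?case
  proof (cases "x = 0")
    case True then show ?thesis using Cons r1 r2 by auto
  next
    case False then show ?thesis using Cons r1 r2 by auto
  qed
qed

lemma glide_ok:
  assumes "composition a" "length a \<le> n"
  shows "glide (replicate (n - length a) 0 @ a) b red \<longleftrightarrow> length b = n \<and> nzok b red \<and> ok a (colword b red)"
  using glide_GL[OF assms(1)] GL_ok assms(2) by simp

lemma Gb_val:
  assumes a: "composition a" "length a \<le> n"
  shows "Gb n a (k, b) = (if length b = n then int (g a (flat b) k) else 0)"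
proof -
  have "Gb n a (k, b) = int (card {red. glide (replicate (n - length a) 0 @ a) b red \<and> ex red = k})"
    by (simp add: Gb_def calG_def)
  also have "{red. glide (replicate (n - length a) 0 @ a) b red \<and> ex red = k}
      = {red. length b = n \<and> nzok b red \<and> ok a (colword b red) \<and> ex red = k}"
    using glide_ok[OF a] by auto
  finally have G: "Gb n a (k, b) = int (card {red. length b = n \<and> nzok b red \<and> ok a (colword b red) \<and> ex red = k})" .
  show ?thesis
  proof (cases "length b = n")
    case False then show ?thesis using G by simp
  next
    case True
    define A where "A = {red. nzok b red \<and> ok a (colword b red) \<and> ex red = k}"
    have inj: "inj_on (colword b) A" unfolding A_def inj_on_def using colword_inj by blast
    have img: "colword b ` A = {w. ok a w \<and> map fst w = flat b \<and> wred w = k}"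
    proof
      show "colword b ` A \<subseteq> {w. ok a w \<and> map fst w = flat b \<and> wred w = k}"
      proof
        fix w assume "w \<in> colword b ` A"
        then obtain red where red: "nzok b red" "ok a (colword b red)" "ex red = k" "w = colword b red"
          unfolding A_def by blast
        have "length b = length red" using red(1) by (simp add: nzok_iff)
        then show "w \<in> {w. ok a w \<and> map fst w = flat b \<and> wred w = k}"
          using red map_fst_colword wred_colword by auto
      qed
      show "{w. ok a w \<and> map fst w = flat b \<and> wred w = k} \<subseteq> colword b ` A"
      proof
        fix w assume w: "w \<in> {w. ok a w \<and> map fst w = flat b \<and> wred w = k}"
        then have m: "colword b (mkred b w) = w" "nzok b (mkred b w)" using mkred by auto
        have "ex (mkred b w) = k" using wred_colword[OF m(2)] m(1) w by simp
        then have "mkred b w \<in> A" unfolding A_def using m w by auto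
        then show "w \<in> colword b ` A" using m(1) by force
      qed
    qed
    have "card {red. length b = n \<and> nzok b red \<and> ok a (colword b red) \<and> ex red = k} = card A"
      using True unfolding A_def by simp
    also have "\<dots> = card (colword b ` A)" using card_image[OF inj] by simp
    also have "\<dots> = g a (flat b) k" unfolding img g_def ..
    finally show ?thesis using G True by simp
  qed
qed

lemma sum_list_flat: "sum_list (flat b) = sum_list b"
  by (induction b) (auto simp: flat_def)

lemma length_flat: "length (flat b) \<le> length b"
  by (simp add: flat_def)

lemma composition_flat: "composition (flat b)"
  by (auto simp: composition_def flat_def)

lemma Gb_fin:
  assumes a: "composition a" "length a \<le> n"
  shows "finite {m. Gb n a m \<noteq> 0}"
proof (rule finite_subset)
  show "{m. Gb n a m \<noteq> 0} \<subseteq> {..n} \<times> {b. set b \<subseteq> {..sum_list a + n} \<and> length b = n}"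
  proof
    fix m assume "m \<in> {m. Gb n a m \<noteq> 0}"
    then obtain k b where m: "m = (k, b)" "Gb n a (k, b) \<noteq> 0" by (cases m) auto
    then have lb: "length b = n" and gn: "g a (flat b) k \<noteq> 0" using Gb_val[OF a] by (auto split: if_splits)
    have "k \<le> length (flat b)" "sum_list (flat b) = sum_list a + k" using g_bound[OF gn] by auto
    moreover have "length (flat b) \<le> n" using length_flat lb by metis
    ultimately have kn: "k \<le> n" and sb: "sum_list b \<le> sum_list a + n" by (auto simp: sum_list_flat)
    have "set b \<subseteq> {..sum_list a + n}" using member_le_sum_list sb by fastforce
    then show "m \<in> {..n} \<times> {b. set b \<subseteq> {..sum_list a + n} \<and> length b = n}" using m kn lb by auto
  qed
  show "finite ({..n} \<times> {b. set b \<subseteq> {..sum_list a + n} \<and> length b = n})"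
    using finite_lists_length_eq[of "{..sum_list a + n}" n] by simp
qed

lemma bpm_in:
  assumes a: "composition a" "length a \<le> n"
  shows "beta_pow_mult k (Gb n a) \<in> QSymB n"
proof -
  have fin: "finite {m. beta_pow_mult k (Gb n a) m \<noteq> 0}"
  proof (rule finite_subset)
    show "{m. beta_pow_mult k (Gb n a) m \<noteq> 0} \<subseteq> (\<lambda>m. (fst m + k, snd m)) ` {m. Gb n a m \<noteq> 0}"
    proof
      fix m assume "m \<in> {m. beta_pow_mult k (Gb n a) m \<noteq> 0}"
      then obtain k' b where m: "m = (k', b)" "k \<le> k'" "Gb n a (k' - k, b) \<noteq> 0"
        by (cases m) (auto simp: beta_pow_mult_def split: if_splits)
      then have "m = (\<lambda>m. (fst m + k, snd m)) (k' - k, b)" by simp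
      then show "m \<in> (\<lambda>m. (fst m + k, snd m)) ` {m. Gb n a m \<noteq> 0}" using m(3) by blast
    qed
    show "finite ((\<lambda>m. (fst m + k, snd m)) ` {m. Gb n a m \<noteq> 0})" using Gb_fin[OF a] by simp
  qed
  have len: "\<forall>k' b. beta_pow_mult k (Gb n a) (k', b) \<noteq> 0 \<longrightarrow> length b = n"
    using Gb_val[OF a] by (auto simp: beta_pow_mult_def split: if_splits)
  have qs: "\<forall>k'. qsym_cond n (\<lambda>b. beta_pow_mult k (Gb n a) (k', b))"
    unfolding qsym_iff using Gb_val[OF a] by (auto simp: beta_pow_mult_def)
  show ?thesis unfolding QSymB_def using fin len qs by blast
qed

definition h :: "nat list \<Rightarrow> nat list \<Rightarrow> int" where
  "h a e = (\<Sum>k\<in>{k. g a e k \<noteq> 0}. (-1) ^ k * int (g a e k))"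

lemma spec_val:
  assumes a: "composition a" "length a \<le> n"
  shows "spec_neg1 (Gb n a) b = (if length b = n then h a (flat b) else 0)"
proof (cases "length b = n")
  case True
  have "{k. Gb n a (k, b) \<noteq> 0} = {k. g a (flat b) k \<noteq> 0}" using Gb_val[OF a] True by simp
  then show ?thesis unfolding spec_neg1_def h_def using True Gb_val[OF a] by simp
next
  case False
  then have "{k. Gb n a (k, b) \<noteq> 0} = {}" using Gb_val[OF a] by simp
  then show ?thesis unfolding spec_neg1_def using False by simp
qed

lemma h_aa: "h a a = 1"
proof -
  have "{k. g a a k \<noteq> 0} = {0}" using g_aa g_tri by fastforce
  then show ?thesis by (simp add: h_def g_aa)
qed

lemma h_tri: "h a e \<noteq> 0 \<Longrightarrow> e = a \<or> length a < length e"
proof -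
  assume "h a e \<noteq> 0"
  then have "{k. g a e k \<noteq> 0} \<noteq> {}" unfolding h_def by (metis sum.empty)
  then obtain k where "g a e k \<noteq> 0" by blast
  then show ?thesis using g_tri by blast
qed

lemma spec_in:
  assumes a: "composition a" "length a \<le> n"
  shows "spec_neg1 (Gb n a) \<in> QSym n"
proof -
  have fin: "finite {b. spec_neg1 (Gb n a) b \<noteq> 0}"
  proof (rule finite_subset)
    show "{b. spec_neg1 (Gb n a) b \<noteq> 0} \<subseteq> snd ` {m. Gb n a m \<noteq> 0}"
    proof
      fix b assume "b \<in> {b. spec_neg1 (Gb n a) b \<noteq> 0}"
      then have lb: "length b = n" and hn: "h a (flat b) \<noteq> 0" using spec_val[OF a] by (auto split: if_splits)
      then have "{k. g a (flat b) k \<noteq> 0} \<noteq> {}" unfolding h_def by (metis sum.empty)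
      then obtain k where "g a (flat b) k \<noteq> 0" by blast
      then have "Gb n a (k, b) \<noteq> 0" using Gb_val[OF a] lb by simp
      then show "b \<in> snd ` {m. Gb n a m \<noteq> 0}" by force
    qed
    show "finite (snd ` {m. Gb n a m \<noteq> 0})" using Gb_fin[OF a] by simp
  qed
  have len: "\<forall>b. spec_neg1 (Gb n a) b \<noteq> 0 \<longrightarrow> length b = n"
    using spec_val[OF a] by (auto split: if_splits)
  have qs: "qsym_cond n (spec_neg1 (Gb n a))"
    unfolding qsym_iff using spec_val[OF a] by auto
  show ?thesis unfolding QSym_def using fin len qs by blast
qed

lemma QSymB_eq: "QSymB n = {p. finite {m. p m \<noteq> 0} \<and> (\<forall>m. p m \<noteq> 0 \<longrightarrow> m \<in> {m. length (snd m) = n}) \<and>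
    (\<forall>m\<in>{m. length (snd m) = n}. \<forall>m'\<in>{m. length (snd m) = n}.
       (fst m, flat (snd m)) = (fst m', flat (snd m')) \<longrightarrow> p m = p m')}"
proof (rule set_eqI)
  fix p :: bpoly
  have A: "(\<forall>k b. p (k, b) \<noteq> 0 \<longrightarrow> length b = n) \<longleftrightarrow> (\<forall>m. p m \<noteq> 0 \<longrightarrow> m \<in> {m. length (snd m) = n})"
    by auto
  have B: "(\<forall>k. qsym_cond n (\<lambda>b. p (k, b))) \<longleftrightarrow>
      (\<forall>m\<in>{m. length (snd m) = n}. \<forall>m'\<in>{m. length (snd m) = n}.
       (fst m, flat (snd m)) = (fst m', flat (snd m')) \<longrightarrow> p m = p m')"
    unfolding qsym_iff by auto
  show "p \<in> QSymB n \<longleftrightarrow> p \<in> {p. finite {m. p m \<noteq> 0} \<and> (\<forall>m. p m \<noteq> 0 \<longrightarrow> m \<in> {m. length (snd m) = n}) \<and>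
    (\<forall>m\<in>{m. length (snd m) = n}. \<forall>m'\<in>{m. length (snd m) = n}.
       (fst m, flat (snd m)) = (fst m', flat (snd m')) \<longrightarrow> p m = p m')}"
    unfolding QSymB_def mem_Collect_eq A B ..
qed

lemma QSym_eq: "QSym n = {p. finite {m. p m \<noteq> 0} \<and> (\<forall>m. p m \<noteq> 0 \<longrightarrow> m \<in> {b. length b = n}) \<and>
    (\<forall>m\<in>{b. length b = n}. \<forall>m'\<in>{b. length b = n}. flat m = flat m' \<longrightarrow> p m = p m')}"
  unfolding QSym_def qsym_iff by auto

theorem mainTheorem10:
  fixes n :: nat
  shows "Z_basis {(k, a). composition a \<and> length a \<le> n}
            (\<lambda>(k, a). beta_pow_mult k (Gb n a)) (QSymB n)
       \<and> Z_basis {a. composition a \<and> length a \<le> n}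
            (\<lambda>a. spec_neg1 (Gb n a)) (QSym n)"
proof
  show "Z_basis {(k, a). composition a \<and> length a \<le> n}
            (\<lambda>(k, a). beta_pow_mult k (Gb n a)) (QSymB n)"
  proof (rule Z_basis_tri[OF QSymB_eq, where \<rho> = "\<lambda>i. length (snd i)" and N = n
        and std = "\<lambda>i. (fst i, replicate (n - length (snd i)) 0 @ snd i)"])
    fix m :: "nat \<times> nat list" assume "m \<in> {m. length (snd m) = n}"
    then show "(fst m, flat (snd m)) \<in> {(k, a). composition a \<and> length a \<le> n}"
      using composition_flat length_flat by (auto intro: order_trans)
  next
    fix i :: "nat \<times> nat list" assume "i \<in> {(k, a). composition a \<and> length a \<le> n}"
    then obtain k a where i: "i = (k, a)" and a: "composition a" "length a \<le> n" by auto
    show "(fst i, replicate (n - length (snd i)) 0 @ snd i) \<in> {m. length (snd m) = n}" using i a by simp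
    show "(fst (fst i, replicate (n - length (snd i)) 0 @ snd i),
          flat (snd (fst i, replicate (n - length (snd i)) 0 @ snd i))) = i"
      using i flat_rep[OF a(1)] by simp
    show "(case i of (k, a) \<Rightarrow> beta_pow_mult k (Gb n a)) \<in> QSymB n" using i bpm_in[OF a] by simp
    show "(case i of (k, a) \<Rightarrow> beta_pow_mult k (Gb n a)) (fst i, replicate (n - length (snd i)) 0 @ snd i) = 1"
      using i Gb_val[OF a] flat_rep[OF a(1)] a(2) g_aa by (simp add: beta_pow_mult_def)
    show "length (snd i) \<le> n" using i a by simp
  next
    fix i :: "nat \<times> nat list" and m
    assume iI: "i \<in> {(k, a). composition a \<and> length a \<le> n}"
      and nz: "(case i of (k, a) \<Rightarrow> beta_pow_mult k (Gb n a)) m \<noteq> 0"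
      and ne: "(fst m, flat (snd m)) \<noteq> i"
    obtain k a where i: "i = (k, a)" and a: "composition a" "length a \<le> n" using iI by auto
    obtain k' b where m: "m = (k', b)" by (cases m)
    have kk: "k \<le> k'" and gn: "Gb n a (k' - k, b) \<noteq> 0"
      using nz i m by (auto simp: beta_pow_mult_def split: if_splits)
    then have "g a (flat b) (k' - k) \<noteq> 0" using Gb_val[OF a] by (auto split: if_splits)
    then have "(flat b = a \<and> k' - k = 0) \<or> length a < length (flat b)" by (rule g_tri)
    then show "length (snd i) < length (snd (fst m, flat (snd m)))"
      using ne i m kk by auto
  qed
next
  show "Z_basis {a. composition a \<and> length a \<le> n} (\<lambda>a. spec_neg1 (Gb n a)) (QSym n)"
  proof (rule Z_basis_tri[OF QSym_eq, where \<rho> = length and N = n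
        and std = "\<lambda>a. replicate (n - length a) 0 @ a"])
    fix m :: "nat list" assume "m \<in> {b. length b = n}"
    then show "flat m \<in> {a. composition a \<and> length a \<le> n}"
      using composition_flat length_flat by (auto intro: order_trans)
  next
    fix a :: "nat list" assume "a \<in> {a. composition a \<and> length a \<le> n}"
    then have a: "composition a" "length a \<le> n" by auto
    show "replicate (n - length a) 0 @ a \<in> {b. length b = n}" using a by simp
    show "flat (replicate (n - length a) 0 @ a) = a" using flat_rep[OF a(1)] .
    show "spec_neg1 (Gb n a) \<in> QSym n" using spec_in[OF a] .
    show "spec_neg1 (Gb n a) (replicate (n - length a) 0 @ a) = 1"
      using spec_val[OF a] flat_rep[OF a(1)] a(2) h_aa by simp
    show "length a \<le> n" using a by simp
  next
    fix a :: "nat list" and m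
    assume aI: "a \<in> {a. composition a \<and> length a \<le> n}" and nz: "spec_neg1 (Gb n a) m \<noteq> 0"
      and ne: "flat m \<noteq> a"
    then have a: "composition a" "length a \<le> n" by auto
    have "h a (flat m) \<noteq> 0" using nz spec_val[OF a] by (auto split: if_splits)
    then show "length a < length (flat m)" using h_tri ne by blast
  qed
qed

end
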